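(* Let $X$ be a real Banach space, $\tau$ the norm or weak topology, and suppose $X$ is $\tau$-ALUR. Then for every $N\in\mathbb{N}$ and every strictly convex monotone norm $\gamma:\mathbb{R}^N\to[0,\infty)$, the space $\ell_\gamma^N(X)$ is $\tau$-ALUR.
   Context: A norm $\gamma$ on $\mathbb{R}^N$ is monotone if $0\le a\le b$ coordinatewise implies $\gamma(a)\le\gamma(b)$. $\ell_\gamma^N(X)$ is $X^N$ with norm $|||(x_1,\dots,x_N)|||=\gamma(\|x_1\|,\dots,\|x_N\|)$, with $\tau$ on it being the corresponding norm or weak topology. A Banach space $Z$ is $\tau$-almost locally uniformly rotund ($\tau$-ALUR) if whenever $x,x_n\in S_Z$ and $h_m\in S_{Z^*}$ satisfy $\lim_m\lim_n h_m(\frac{x_n+x}{2})=1$, we have $x_n\to x$ in $\tau$. *)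

theory Defs
  imports "HOL-Analysis.Analysis"
begin

definition nrm_bounded_functional :: "('v::real_vector \<Rightarrow> real) \<Rightarrow> ('v \<Rightarrow> real) \<Rightarrow> bool" where
  "nrm_bounded_functional nrm h \<longleftrightarrow> linear h \<and> (\<exists>C. \<forall>v. \<bar>h v\<bar> \<le> C * nrm v)"

definition dual_norm :: "('v::real_vector \<Rightarrow> real) \<Rightarrow> ('v \<Rightarrow> real) \<Rightarrow> real" where
  "dual_norm nrm h = Sup {\<bar>h v\<bar> | v. nrm v \<le> 1}"

definition dual_sphere :: "('v::real_vector \<Rightarrow> real) \<Rightarrow> ('v \<Rightarrow> real) \<Rightarrow> bool" where
  "dual_sphere nrm h \<longleftrightarrow> nrm_bounded_functional nrm h \<and> dual_norm nrm h = 1"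

datatype topo = NormTop | WeakTop

definition tau_conv :: "topo \<Rightarrow> ('v::real_vector \<Rightarrow> real) \<Rightarrow> (nat \<Rightarrow> 'v) \<Rightarrow> 'v \<Rightarrow> bool" where
  "tau_conv t nrm xs x \<longleftrightarrow>
     (case t of
        NormTop \<Rightarrow> ((\<lambda>n. nrm (xs n - x)) \<longlonglongrightarrow> 0)
      | WeakTop \<Rightarrow> (\<forall>h. nrm_bounded_functional nrm h \<longrightarrow> ((\<lambda>n. h (xs n)) \<longlonglongrightarrow> h x)))"

definition tau_ALUR :: "topo \<Rightarrow> ('v::real_vector \<Rightarrow> real) \<Rightarrow> bool" where
  "tau_ALUR t nrm \<longleftrightarrow>
     (\<forall>x xs hs. nrm x = 1 \<and> (\<forall>n. nrm (xs n) = 1) \<and> (\<forall>m. dual_sphere nrm (hs m)) \<and>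
        (\<exists>L. (\<forall>m. (\<lambda>n. hs m ((1/2) *\<^sub>R (xs n + x))) \<longlonglongrightarrow> L m) \<and> L \<longlonglongrightarrow> 1)
        \<longrightarrow> tau_conv t nrm xs x)"

definition is_norm_fun :: "('b::real_vector \<Rightarrow> real) \<Rightarrow> bool" where
  "is_norm_fun g \<longleftrightarrow> (\<forall>x. 0 \<le> g x) \<and> (\<forall>x. g x = 0 \<longleftrightarrow> x = 0) \<and>
     (\<forall>c x. g (c *\<^sub>R x) = \<bar>c\<bar> * g x) \<and> (\<forall>x y. g (x + y) \<le> g x + g y)"

definition monotone_norm :: "(real^'n \<Rightarrow> real) \<Rightarrow> bool" where
  "monotone_norm g \<longleftrightarrow> (\<forall>a b. (\<forall>i. 0 \<le> a $ i \<and> a $ i \<le> b $ i) \<longrightarrow> g a \<le> g b)"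

definition strictly_convex_norm :: "('b::real_vector \<Rightarrow> real) \<Rightarrow> bool" where
  "strictly_convex_norm g \<longleftrightarrow>
     (\<forall>x y. g x = 1 \<and> g y = 1 \<and> x \<noteq> y \<longrightarrow> g ((1/2) *\<^sub>R (x + y)) < 1)"

definition lgamma_norm :: "(real^'n \<Rightarrow> real) \<Rightarrow> ('a::real_normed_vector)^'n \<Rightarrow> real" where
  "lgamma_norm g x = g (\<chi> i. norm (x $ i))"

end

theory Submission
  imports Defs "HOL-Library.Diagonal_Subsequence"
begin
definition normlike :: "('v::real_vector \<Rightarrow> real) \<Rightarrow> bool" where
  "normlike nrm \<longleftrightarrow> (\<forall>v. 0 \<le> nrm v) \<and> (\<forall>c v. nrm (c *\<^sub>R v) = \<bar>c\<bar> * nrm v)"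

lemma normlike_norm: "normlike (norm :: 'a::real_normed_vector \<Rightarrow> real)"
  unfolding normlike_def by auto

lemma normlike_0: "normlike nrm \<Longrightarrow> nrm 0 = 0"
  unfolding normlike_def by (metis abs_zero mult_zero_left scale_zero_left)

lemma bf_linear: "nrm_bounded_functional nrm h \<Longrightarrow> linear h"
  unfolding nrm_bounded_functional_def by blast

lemma bf_bdd:
  assumes "nrm_bounded_functional nrm h" "normlike nrm"
  shows "bdd_above {\<bar>h v\<bar> | v. nrm v \<le> 1}"
proof -
  obtain C where C: "\<forall>v. \<bar>h v\<bar> \<le> C * nrm v" using assms(1) unfolding nrm_bounded_functional_def by blast
  have "\<bar>h v\<bar> \<le> \<bar>C\<bar>" if "nrm v \<le> 1" for v
  proof -
    have p: "0 \<le> nrm v" using assms(2) unfolding normlike_def by blast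
    have "C * nrm v \<le> \<bar>C\<bar> * nrm v" using p by (intro mult_right_mono) auto
    also have "... \<le> \<bar>C\<bar>" using that p by (simp add: mult_left_le)
    finally show ?thesis using C by (meson order_trans)
  qed
  thus ?thesis by (intro bdd_aboveI[of _ "\<bar>C\<bar>"]) blast
qed

lemma dn_upper:
  assumes "nrm_bounded_functional nrm h" "normlike nrm" "nrm v \<le> 1"
  shows "\<bar>h v\<bar> \<le> dual_norm nrm h"
  unfolding dual_norm_def using assms by (intro cSup_upper bf_bdd) auto

lemma dn_nonneg:
  assumes "nrm_bounded_functional nrm h" "normlike nrm"
  shows "0 \<le> dual_norm nrm h"
proof -
  have "\<bar>h 0\<bar> \<le> dual_norm nrm h" using assms normlike_0[OF assms(2)] by (intro dn_upper) auto
  thus ?thesis by linarith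
qed

lemma dn_least:
  assumes "normlike nrm" "\<And>v. nrm v \<le> 1 \<Longrightarrow> \<bar>h v\<bar> \<le> B"
  shows "dual_norm nrm h \<le> B"
  unfolding dual_norm_def using assms normlike_0[OF assms(1)] by (intro cSup_least) (auto intro!: exI[of _ 0])

lemma dn_bound:
  assumes "nrm_bounded_functional nrm h" "normlike nrm"
  shows "\<bar>h v\<bar> \<le> dual_norm nrm h * nrm v"
proof (cases "nrm v = 0")
  case True
  obtain C where C: "\<forall>v. \<bar>h v\<bar> \<le> C * nrm v" using assms(1) unfolding nrm_bounded_functional_def by blast
  then show ?thesis using True C[rule_format, of v] by simp
next
  case False
  have p: "0 < nrm v" using False assms(2) unfolding normlike_def by (metis order_le_less)
  have "nrm ((1 / nrm v) *\<^sub>R v) = 1" using assms(2) p unfolding normlike_def by simp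
  hence "\<bar>h ((1 / nrm v) *\<^sub>R v)\<bar> \<le> dual_norm nrm h" using assms by (intro dn_upper) auto
  moreover have "h ((1 / nrm v) *\<^sub>R v) = h v / nrm v"
    using bf_linear[OF assms(1)] by (simp add: linear_scale)
  ultimately have "\<bar>h v\<bar> / nrm v \<le> dual_norm nrm h" using p by simp
  thus ?thesis using p by (simp add: divide_le_eq)
qed

lemma dn_approx:
  assumes "nrm_bounded_functional nrm h" "normlike nrm" "0 < e"
  shows "\<exists>v. nrm v \<le> 1 \<and> h v > dual_norm nrm h - e"
proof -
  have "\<exists>y\<in>{\<bar>h v\<bar> | v. nrm v \<le> 1}. dual_norm nrm h - e < y"
    unfolding dual_norm_def
    by (rule less_cSupD) (use assms normlike_0[OF assms(2)] in \<open>auto intro!: exI[of _ 0]\<close>)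
  then obtain v where v: "nrm v \<le> 1" "dual_norm nrm h - e < \<bar>h v\<bar>" by blast
  show ?thesis
  proof (cases "h v \<ge> 0")
    case True thus ?thesis using v by auto
  next
    case False
    have "nrm (-v) = nrm v" using assms(2) unfolding normlike_def by (metis abs_minus_cancel abs_one mult_1 scaleR_minus1_left)
    moreover have "h (-v) = - h v" using bf_linear[OF assms(1)] by (simp add: linear_neg)
    ultimately show ?thesis using v False by (intro exI[of _ "-v"]) auto
  qed
qed

lemma bf_scale:
  assumes "nrm_bounded_functional nrm h"
  shows "nrm_bounded_functional nrm (\<lambda>v. h v / c)"
proof -
  obtain C where C: "\<forall>v. \<bar>h v\<bar> \<le> C * nrm v" using assms(1) unfolding nrm_bounded_functional_def by blast
  have "linear (\<lambda>v. h v / c)" using bf_linear[OF assms] 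
    by (intro linearI) (simp_all add: linear_add linear_scale add_divide_distrib)
  moreover have "\<bar>h v / c\<bar> \<le> (C / \<bar>c\<bar>) * nrm v" for v
    using C[rule_format, of v] by (cases "c = 0") (auto simp: abs_divide divide_right_mono)
  ultimately show ?thesis unfolding nrm_bounded_functional_def by blast
qed

lemma dn_scale:
  assumes "nrm_bounded_functional nrm h" "normlike nrm" "0 < c"
  shows "dual_norm nrm (\<lambda>v. h v / c) = dual_norm nrm h / c"
proof (rule antisym)
  show "dual_norm nrm (\<lambda>v. h v / c) \<le> dual_norm nrm h / c"
  proof (rule dn_least[OF assms(2)])
    fix v assume "nrm v \<le> 1"
    hence "\<bar>h v\<bar> \<le> dual_norm nrm h" using assms by (intro dn_upper)
    thus "\<bar>h v / c\<bar> \<le> dual_norm nrm h / c" using assms(3) by (simp add: abs_divide divide_right_mono)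
  qed
  have "dual_norm nrm h \<le> c * dual_norm nrm (\<lambda>v. h v / c)"
  proof (rule dn_least[OF assms(2)])
    fix v assume "nrm v \<le> 1"
    hence "\<bar>h v / c\<bar> \<le> dual_norm nrm (\<lambda>v. h v / c)" using assms bf_scale by (intro dn_upper) auto
    thus "\<bar>h v\<bar> \<le> c * dual_norm nrm (\<lambda>v. h v / c)" using assms(3) by (simp add: abs_divide divide_le_eq mult.commute)
  qed
  thus "dual_norm nrm h / c \<le> dual_norm nrm (\<lambda>v. h v / c)" using assms(3) by (simp add: divide_le_eq mult.commute)
qed

lemma subseq_crit:
  fixes s :: "nat \<Rightarrow> real"
  assumes "\<And>r::nat\<Rightarrow>nat. strict_mono r \<Longrightarrow> \<exists>r'::nat\<Rightarrow>nat. strict_mono r' \<and> (\<lambda>n. s (r (r' n))) \<longlonglongrightarrow> l"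
  shows "s \<longlonglongrightarrow> l"
proof (rule ccontr)
  assume "\<not> s \<longlonglongrightarrow> l"
  then obtain e where e: "e > 0" "\<not> eventually (\<lambda>n. dist (s n) l < e) sequentially"
    unfolding tendsto_iff by blast
  then obtain r :: "nat \<Rightarrow> nat" where r: "strict_mono r" "\<forall>n. \<not> dist (s (r n)) l < e"
    using not_eventually_sequentiallyD by blast
  obtain r' where r': "strict_mono r'" "(\<lambda>n. s (r (r' n))) \<longlonglongrightarrow> l" using assms[OF r(1)] by blast
  have "eventually (\<lambda>n. dist (s (r (r' n))) l < e) sequentially"
    using r'(2) e(1) unfolding tendsto_iff by blast
  then obtain n where "dist (s (r (r' n))) l < e" by (meson eventually_sequentially order_refl)
  thus False using r(2) by blast
qed

lemma tau_conv_subseq_crit: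
  fixes xs :: "nat \<Rightarrow> 'a::real_normed_vector"
  assumes "\<And>r::nat\<Rightarrow>nat. strict_mono r \<Longrightarrow> \<exists>r'::nat\<Rightarrow>nat. strict_mono r' \<and> tau_conv t norm (\<lambda>n. xs (r (r' n))) x"
  shows "tau_conv t norm xs x"
proof (cases t)
  case NormTop
  have "(\<lambda>n. norm (xs n - x)) \<longlonglongrightarrow> 0"
    by (rule subseq_crit) (use assms NormTop in \<open>auto simp: tau_conv_def\<close>)
  thus ?thesis using NormTop by (simp add: tau_conv_def)
next
  case WeakTop
  have "(\<lambda>n. h (xs n)) \<longlonglongrightarrow> h x" if "nrm_bounded_functional norm h" for h
    by (rule subseq_crit) (use assms WeakTop that in \<open>fastforce simp: tau_conv_def\<close>)
  thus ?thesis using WeakTop by (simp add: tau_conv_def)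
qed

lemma alur_core:
  fixes x :: "'a::real_normed_vector" and xs :: "nat \<Rightarrow> 'a"
  assumes A: "tau_ALUR t (norm::'a\<Rightarrow>real)" "norm x = 1" "\<forall>n. norm (xs n) = 1"
    and G: "\<And>k. dual_sphere norm (G k)"
    and Ev: "\<And>k. \<forall>\<^sub>F n in sequentially. G k ((1/2) *\<^sub>R (xs n + x)) > 1 - inverse (real (Suc k))"
  shows "\<exists>r::nat\<Rightarrow>nat. strict_mono r \<and> tau_conv t norm (\<lambda>n. xs (r n)) x"
proof -
  define v where "v k n = G k ((1/2) *\<^sub>R (xs n + x))" for k n
  have vb: "\<bar>v k n\<bar> \<le> 1" for k n
  proof -
    have "norm ((1/2) *\<^sub>R (xs n + x)) \<le> 1"
      using A(2,3) norm_triangle_ineq[of "xs n" x] by simp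
    hence "\<bar>v k n\<bar> \<le> dual_norm norm (G k)" unfolding v_def
      using G[of k] normlike_norm by (intro dn_upper) (auto simp: dual_sphere_def)
    thus ?thesis using G[of k] by (simp add: dual_sphere_def)
  qed
  interpret subseqs "\<lambda>k s. convergent (\<lambda>j. v k (s j))"
  proof
    fix k and s :: "nat \<Rightarrow> nat" assume "strict_mono s"
    have "bounded (range (\<lambda>j. v k (s j)))"
      unfolding bounded_iff using vb by (intro exI[of _ 1]) auto
    then obtain l r where "strict_mono r" "((\<lambda>j. v k (s j)) \<circ> r) \<longlonglongrightarrow> l"
      using bounded_imp_convergent_subsequence by blast
    thus "\<exists>r'. strict_mono r' \<and> convergent (\<lambda>j. v k ((s \<circ> r') j))"
      by (auto simp: convergent_def o_def)
  qed
  have conv: "convergent (\<lambda>j. v k (diagseq j))" for k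
  proof -
    have "convergent (\<lambda>j. v k ((diagseq \<circ> (+) (Suc k)) j))"
      by (rule diagseq_holds) (auto dest: convergent_subseq_convergent simp: o_def)
    then obtain l where "(\<lambda>j. v k (diagseq (j + Suc k))) \<longlonglongrightarrow> l"
      by (auto simp: convergent_def o_def add.commute)
    hence "(\<lambda>j. v k (diagseq j)) \<longlonglongrightarrow> l" by (rule LIMSEQ_offset)
    thus ?thesis by (auto simp: convergent_def)
  qed
  define L where "L k = lim (\<lambda>j. v k (diagseq j))" for k
  have Lt: "(\<lambda>j. v k (diagseq j)) \<longlonglongrightarrow> L k" for k
    using conv[of k] unfolding L_def convergent_LIMSEQ_iff by simp
  have Lup: "L k \<le> 1" for k
    using Lt[of k] vb by (intro LIMSEQ_le_const2) (auto simp: abs_le_iff)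
  have Llow: "1 - inverse (real (Suc k)) \<le> L k" for k
  proof -
    have "\<forall>\<^sub>F j in sequentially. v k (diagseq j) > 1 - inverse (real (Suc k))"
      using eventually_subseq[OF subseq_diagseq Ev[of k]] unfolding v_def by simp
    thus ?thesis using Lt[of k]
      by (intro tendsto_lowerbound[of "\<lambda>j. v k (diagseq j)"]) (auto elim: eventually_mono)
  qed
  have "(\<lambda>k. 1 - inverse (real (Suc k))) \<longlonglongrightarrow> 1 - 0"
    by (intro tendsto_diff tendsto_const LIMSEQ_inverse_real_of_nat)
  hence lo: "(\<lambda>k. 1 - inverse (real (Suc k))) \<longlonglongrightarrow> 1" by simp
  have L1: "L \<longlonglongrightarrow> 1"
    by (rule real_tendsto_sandwich[OF _ _ lo tendsto_const])
       (use Lup Llow in \<open>auto intro: always_eventually\<close>)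
  have "tau_conv t norm (\<lambda>n. xs (diagseq n)) x"
  proof -
    have "\<exists>L. (\<forall>m. (\<lambda>n. G m ((1/2) *\<^sub>R (xs (diagseq n) + x))) \<longlonglongrightarrow> L m) \<and> L \<longlonglongrightarrow> 1"
      using Lt L1 unfolding v_def by (intro exI[of _ L]) simp
    moreover have "norm x = 1 \<and> (\<forall>n. norm (xs (diagseq n)) = 1) \<and> (\<forall>m. dual_sphere norm (G m)) \<and>
        (\<exists>L. (\<forall>m. (\<lambda>n. G m ((1/2) *\<^sub>R (xs (diagseq n) + x))) \<longlonglongrightarrow> L m) \<and> L \<longlonglongrightarrow> 1)
        \<longrightarrow> tau_conv t norm (\<lambda>n. xs (diagseq n)) x"
      using A(1) unfolding tau_ALUR_def
      by (rule spec[of _ G, OF spec[of _ "\<lambda>n. xs (diagseq n)", OF spec[of _ x]]])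
    ultimately show ?thesis using A(2,3) G by blast
  qed
  thus ?thesis using subseq_diagseq by blast
qed

lemma alur_weak:
  fixes x :: "'a::real_normed_vector" and xs :: "nat \<Rightarrow> 'a"
  assumes A: "tau_ALUR t (norm::'a\<Rightarrow>real)" "norm x = 1" "\<forall>n. norm (xs n) = 1"
    and H: "\<And>e. e > 0 \<Longrightarrow> \<exists>g. dual_sphere norm g \<and> (\<forall>\<^sub>F n in sequentially. g ((1/2) *\<^sub>R (xs n + x)) > 1 - e)"
  shows "tau_conv t norm xs x"
proof -
  have "\<forall>k. \<exists>g. dual_sphere norm g \<and> (\<forall>\<^sub>F n in sequentially. g ((1/2) *\<^sub>R (xs n + x)) > 1 - inverse (real (Suc k)))"
    using H by simp
  then obtain G where G: "\<And>k. dual_sphere norm (G k)"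
    "\<And>k. \<forall>\<^sub>F n in sequentially. G k ((1/2) *\<^sub>R (xs n + x)) > 1 - inverse (real (Suc k))"
    by metis
  show ?thesis
  proof (rule tau_conv_subseq_crit)
    fix r :: "nat \<Rightarrow> nat" assume r: "strict_mono r"
    show "\<exists>r'::nat\<Rightarrow>nat. strict_mono r' \<and> tau_conv t norm (\<lambda>n. xs (r (r' n))) x"
      using alur_core[OF A(1,2), of "\<lambda>n. xs (r n)" G] A(3) G(1) eventually_subseq[OF r G(2)] by auto
  qed
qed

locale gam =
  fixes \<gamma> :: "real^'n \<Rightarrow> real"
  assumes nf: "is_norm_fun \<gamma>" and mn: "monotone_norm \<gamma>" and sc: "strictly_convex_norm \<gamma>"
begin

lemma g_nonneg: "0 \<le> \<gamma> x" using nf unfolding is_norm_fun_def by blast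
lemma g_zero: "\<gamma> x = 0 \<longleftrightarrow> x = 0" using nf unfolding is_norm_fun_def by blast
lemma g_scale: "\<gamma> (c *\<^sub>R x) = \<bar>c\<bar> * \<gamma> x" using nf unfolding is_norm_fun_def by blast
lemma g_tri: "\<gamma> (x + y) \<le> \<gamma> x + \<gamma> y" using nf unfolding is_norm_fun_def by blast
lemma g_mono: "(\<And>i. 0 \<le> a $ i) \<Longrightarrow> (\<And>i. a $ i \<le> b $ i) \<Longrightarrow> \<gamma> a \<le> \<gamma> b"
  using mn unfolding monotone_norm_def by blast
lemma g_sc: "\<gamma> x = 1 \<Longrightarrow> \<gamma> y = 1 \<Longrightarrow> x \<noteq> y \<Longrightarrow> \<gamma> ((1/2) *\<^sub>R (x + y)) < 1"
  using sc unfolding strictly_convex_norm_def by blast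

lemma g_minus: "\<gamma> (- x) = \<gamma> x" using g_scale[of "-1" x] by simp

lemma g_diff: "\<bar>\<gamma> x - \<gamma> y\<bar> \<le> \<gamma> (x - y)"
proof -
  have "\<gamma> x \<le> \<gamma> (x - y) + \<gamma> y" using g_tri[of "x - y" y] by simp
  moreover have "\<gamma> y \<le> \<gamma> (y - x) + \<gamma> x" using g_tri[of "y - x" x] by simp
  moreover have "\<gamma> (y - x) = \<gamma> (x - y)" using g_minus[of "x - y"] by simp
  ultimately show ?thesis by linarith
qed

lemma g_sum: "finite S \<Longrightarrow> \<gamma> (sum f S) \<le> (\<Sum>i\<in>S. \<gamma> (f i))"
proof (induction S rule: finite_induct)
  case empty then show ?case using g_zero[of 0] by simp
next
  case (insert a S) then show ?case using g_tri[of "f a" "sum f S"] by simp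
qed

definition e where "e i = \<gamma> (axis i 1)"

lemma e_pos: "e i > 0"
proof -
  have "axis i (1::real) \<noteq> 0" by (simp add: axis_eq_0_iff)
  thus ?thesis unfolding e_def using g_zero g_nonneg by (metis order_le_less)
qed

lemma axis_scale: "axis i (c::real) = c *\<^sub>R axis i 1"
  by (simp add: vec_eq_iff axis_def)

lemma g_axis: "\<gamma> (axis i c) = \<bar>c\<bar> * e i"
  unfolding e_def by (subst axis_scale) (simp add: g_scale)

lemma g_upper: "\<gamma> a \<le> (\<Sum>i\<in>UNIV. \<bar>a $ i\<bar> * e i)"
proof -
  have "a = (\<Sum>i\<in>UNIV. axis i (a $ i))"
    by (simp add: vec_eq_iff axis_def)
  hence "\<gamma> a = \<gamma> (\<Sum>i\<in>UNIV. axis i (a $ i))" by simp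
  also have "... \<le> (\<Sum>i\<in>UNIV. \<gamma> (axis i (a $ i)))" by (rule g_sum) simp
  finally show ?thesis by (simp add: g_axis)
qed

definition K where "K = (\<Sum>i\<in>UNIV. e i)"

lemma K_nonneg: "0 \<le> K" unfolding K_def using e_pos by (simp add: sum_nonneg less_imp_le)

lemma g_le_K: "\<gamma> a \<le> K * norm a"
proof -
  have "\<gamma> a \<le> (\<Sum>i\<in>UNIV. \<bar>a $ i\<bar> * e i)" by (rule g_upper)
  also have "... \<le> (\<Sum>i\<in>UNIV. norm a * e i)"
    using e_pos by (intro sum_mono mult_right_mono component_le_norm_cart) (auto simp: less_imp_le)
  also have "... = norm a * K" by (simp add: K_def sum_distrib_left)
  finally show ?thesis by (simp add: mult.commute)
qed

lemma g_lower: "(\<And>j. 0 \<le> a $ j) \<Longrightarrow> a $ i * e i \<le> \<gamma> a"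
proof -
  assume nn: "\<And>j. 0 \<le> a $ j"
  have "\<gamma> (axis i (a $ i)) \<le> \<gamma> a"
    by (rule g_mono) (auto simp: axis_def nn)
  thus ?thesis using nn[of i] by (simp add: g_axis)
qed

lemma g_tendsto:
  assumes "(f \<longlongrightarrow> a) F"
  shows "((\<lambda>n. \<gamma> (f n)) \<longlongrightarrow> \<gamma> a) F"
proof -
  have "((\<lambda>n. norm (f n - a)) \<longlongrightarrow> 0) F" by (rule tendsto_norm_zero[OF LIM_zero[OF assms]])
  hence "((\<lambda>n. K * norm (f n - a)) \<longlongrightarrow> K * 0) F" by (intro tendsto_mult tendsto_const)
  hence z: "((\<lambda>n. K * norm (f n - a)) \<longlongrightarrow> 0) F" by simp
  have "((\<lambda>n. \<gamma> (f n) - \<gamma> a) \<longlongrightarrow> 0) F"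
  proof (rule tendsto_0_le[OF z, of _ 1])
    show "\<forall>\<^sub>F n in F. norm (\<gamma> (f n) - \<gamma> a) \<le> norm (K * norm (f n - a)) * 1"
      using g_diff g_le_K K_nonneg by (intro always_eventually allI) (simp, meson order_trans abs_ge_self)
  qed
  thus ?thesis by (simp add: LIM_zero_iff)
qed

lemma g_strict_mono:
  assumes "\<And>i. 0 \<le> c $ i" "\<And>i. c $ i \<le> b $ i" "\<gamma> c = 1" "\<gamma> b = 1"
  shows "c = b"
proof (rule ccontr)
  assume "c \<noteq> b"
  hence "\<gamma> ((1/2) *\<^sub>R (c + b)) < 1" using assms g_sc by blast
  moreover have "\<gamma> c \<le> \<gamma> ((1/2) *\<^sub>R (c + b))"
    using assms(1,2) by (intro g_mono) auto
  ultimately show False using assms(3) by simp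
qed

lemma g_drop:
  assumes "\<And>j. 0 \<le> b $ j" "\<gamma> b = 1" "b $ i > 0"
  shows "\<gamma> (\<chi> j. if j = i then 0 else b $ j) < 1"
proof -
  let ?c = "\<chi> j. if j = i then 0 else b $ j"
  have le: "\<gamma> ?c \<le> 1" using assms by (subst assms(2)[symmetric], intro g_mono) auto
  have "?c \<noteq> b" using assms(3) by (auto simp: vec_eq_iff intro!: exI[of _ i])
  moreover have "\<And>j. 0 \<le> ?c $ j" "\<And>j. ?c $ j \<le> b $ j" using assms(1) by auto
  ultimately have "\<gamma> ?c \<noteq> 1" using g_strict_mono[of ?c b] assms(2) by blast
  thus ?thesis using le by simp
qed

end

context gam begin

abbreviation N :: "('a::real_normed_vector)^'n \<Rightarrow> real" where "N \<equiv> lgamma_norm \<gamma>"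

lemma N_normlike: "normlike (N :: ('a::real_normed_vector)^'n \<Rightarrow> real)"
proof -
  have "(\<chi> i. norm ((c *\<^sub>R y) $ i)) = \<bar>c\<bar> *\<^sub>R (\<chi> i. norm (y $ i))" for c and y :: "'a^'n"
    by (simp add: vec_eq_iff)
  thus ?thesis unfolding normlike_def lgamma_norm_def by (simp add: g_nonneg g_scale)
qed

lemma N_axis: "N (axis i (v::'a::real_normed_vector)) = norm v * e i"
proof -
  have "(\<chi> j. norm (axis i v $ j)) = axis i (norm v)" by (simp add: vec_eq_iff axis_def)
  thus ?thesis unfolding lgamma_norm_def by (simp add: g_axis)
qed

lemma axis_linear: "linear (axis i :: 'a::real_vector \<Rightarrow> 'a^'n)"
  by (intro linearI) (simp_all add: vec_eq_iff axis_def)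

lemma comp_bf:
  assumes "nrm_bounded_functional N (H :: ('a::real_normed_vector)^'n \<Rightarrow> real)"
  shows "nrm_bounded_functional norm (\<lambda>v. H (axis i v))"
proof -
  obtain C where C: "\<forall>v. \<bar>H v\<bar> \<le> C * N v" using assms unfolding nrm_bounded_functional_def by blast
  have "linear (\<lambda>v. H (axis i v))"
    using linear_compose[OF axis_linear bf_linear[OF assms]] by (simp add: o_def)
  moreover have "\<bar>H (axis i v)\<bar> \<le> (C * e i) * norm v" for v
    using C[rule_format, of "axis i v"] by (simp add: N_axis mult_ac)
  ultimately show ?thesis unfolding nrm_bounded_functional_def by blast
qed

lemma H_sum:
  assumes "linear (H :: ('a::real_vector)^'n \<Rightarrow> real)"
  shows "H y = (\<Sum>i\<in>UNIV. H (axis i (y $ i)))"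
proof -
  have "y = (\<Sum>i\<in>UNIV. axis i (y $ i))" by (simp add: vec_eq_iff axis_def)
  hence "H y = H (\<Sum>i\<in>UNIV. axis i (y $ i))" by simp
  also have "... = (\<Sum>i\<in>UNIV. H (axis i (y $ i)))" by (rule linear_sum[OF assms])
  finally show ?thesis .
qed

lemma KI:
  assumes H: "nrm_bounded_functional N (H :: ('a::real_normed_vector)^'n \<Rightarrow> real)" "dual_norm N H \<le> 1"
    and nn: "\<And>i. 0 \<le> a $ i"
  shows "(\<Sum>i\<in>UNIV. dual_norm norm (\<lambda>v. H (axis i v)) * a $ i) \<le> \<gamma> a"
proof -
  define S where "S = (\<Sum>i\<in>UNIV. a $ i)"
  have S0: "0 \<le> S" unfolding S_def using nn by (simp add: sum_nonneg)
  let ?psi = "\<lambda>i. dual_norm norm (\<lambda>v. H (axis i v))"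
  have main: "(\<Sum>i\<in>UNIV. ?psi i * a $ i) \<le> \<gamma> a + eps * S" if eps: "eps > 0" for eps
  proof -
    have "\<forall>i. \<exists>v. norm v \<le> 1 \<and> H (axis i v) > ?psi i - eps"
      using dn_approx[OF comp_bf[OF H(1)] normlike_norm eps] by blast
    then obtain V where V: "\<And>i. norm (V i) \<le> 1" "\<And>i. H (axis i (V i)) > ?psi i - eps" by metis
    define y where "y = (\<chi> i. a $ i *\<^sub>R V i)"
    have lin: "linear H" using bf_linear[OF H(1)] .
    have "H y = (\<Sum>i\<in>UNIV. H (axis i (a $ i *\<^sub>R V i)))" using H_sum[OF lin, of y] by (simp add: y_def)
    also have "... = (\<Sum>i\<in>UNIV. a $ i * H (axis i (V i)))"
    proof (rule sum.cong[OF refl])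
      fix i
      have "axis i (a $ i *\<^sub>R V i) = a $ i *\<^sub>R axis i (V i)" by (simp add: vec_eq_iff axis_def)
      thus "H (axis i (a $ i *\<^sub>R V i)) = a $ i * H (axis i (V i))" by (simp add: linear_scale[OF lin])
    qed
    finally have Hy: "H y = (\<Sum>i\<in>UNIV. a $ i * H (axis i (V i)))" .
    have "(\<Sum>i\<in>UNIV. a $ i * (?psi i - eps)) \<le> (\<Sum>i\<in>UNIV. a $ i * H (axis i (V i)))"
      using V(2) nn by (intro sum_mono mult_left_mono) (auto simp: less_imp_le)
    hence lo: "(\<Sum>i\<in>UNIV. ?psi i * a $ i) - eps * S \<le> H y"
      by (simp add: Hy S_def algebra_simps sum_subtractf sum_distrib_left)
    have "H y \<le> \<bar>H y\<bar>" by simp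
    also have "... \<le> dual_norm N H * N y" by (rule dn_bound[OF H(1) N_normlike])
    also have "... \<le> 1 * N y" using H(2) N_normlike by (intro mult_right_mono) (auto simp: normlike_def)
    also have "... \<le> \<gamma> a"
      unfolding lgamma_norm_def y_def using nn V(1)
      by simp (intro g_mono, auto intro: mult_left_le)
    finally show ?thesis using lo by linarith
  qed
  show ?thesis
  proof (rule field_le_epsilon)
    fix d :: real assume d: "d > 0"
    have "0 < d / (S + 1)" using d S0 by simp
    hence "(\<Sum>i\<in>UNIV. ?psi i * a $ i) \<le> \<gamma> a + (d / (S + 1)) * S" by (rule main)
    also have "(d / (S + 1)) * S \<le> d" using d S0 by (simp add: field_simps)
    finally show "(\<Sum>i\<in>UNIV. ?psi i * a $ i) \<le> \<gamma> a + d" by simp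
  qed
qed

end

lemma subseq_limit_unique:
  fixes s :: "nat \<Rightarrow> 'b::heine_borel"
  assumes bd: "bounded (range s)"
    and u: "\<And>r l. strict_mono (r::nat\<Rightarrow>nat) \<Longrightarrow> (\<lambda>n. s (r n)) \<longlonglongrightarrow> l \<Longrightarrow> l = b"
  shows "s \<longlonglongrightarrow> b"
proof (rule ccontr)
  assume "\<not> s \<longlonglongrightarrow> b"
  then obtain e where e: "e > 0" "\<not> eventually (\<lambda>n. dist (s n) b < e) sequentially"
    unfolding tendsto_iff by blast
  then obtain r :: "nat \<Rightarrow> nat" where r: "strict_mono r" "\<forall>n. \<not> dist (s (r n)) b < e"
    using not_eventually_sequentiallyD by blast
  have "bounded (range (s \<circ> r))" using bd by (rule bounded_subset) auto
  then obtain l r' where r': "strict_mono r'" "((s \<circ> r) \<circ> r') \<longlonglongrightarrow> l"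
    using bounded_imp_convergent_subsequence by blast
  have "strict_mono (r \<circ> r')" using r(1) r'(1) by (rule strict_mono_o)
  moreover have "(\<lambda>n. s ((r \<circ> r') n)) \<longlonglongrightarrow> l" using r'(2) by (simp add: o_def)
  ultimately have "l = b" by (rule u)
  hence "eventually (\<lambda>n. dist (s (r (r' n))) b < e) sequentially"
    using r'(2) e(1) unfolding tendsto_iff by (simp add: o_def)
  then obtain n where "dist (s (r (r' n))) b < e" by (meson eventually_sequentially order_refl)
  thus False using r(2) by blast
qed

lemma lim1:
  fixes f :: "nat \<Rightarrow> real"
  assumes "\<And>eps. eps > 0 \<Longrightarrow> \<forall>\<^sub>F n in sequentially. f n > 1 - eps" "\<And>n. f n \<le> 1"
  shows "f \<longlonglongrightarrow> 1"
proof (rule order_tendstoI)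
  fix a :: real assume "a < 1"
  thus "\<forall>\<^sub>F n in sequentially. a < f n" using assms(1)[of "1 - a"] by simp
next
  fix a :: real assume "1 < a"
  thus "\<forall>\<^sub>F n in sequentially. f n < a" using assms(2) by (intro always_eventually) (meson le_less_trans)
qed

lemma norm_imp_tau:
  fixes y :: "nat \<Rightarrow> 'a::real_normed_vector"
  assumes "(\<lambda>n. norm (y n - x0)) \<longlonglongrightarrow> 0"
  shows "tau_conv t norm y x0"
proof (cases t)
  case NormTop thus ?thesis using assms by (simp add: tau_conv_def)
next
  case WeakTop
  have "(\<lambda>n. h (y n)) \<longlonglongrightarrow> h x0" if h: "nrm_bounded_functional norm h" for h
  proof -
    have lin: "linear h" using bf_linear[OF h] .
    have "(\<lambda>n. dual_norm norm h * norm (y n - x0)) \<longlonglongrightarrow> dual_norm norm h * 0"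
      using assms by (intro tendsto_mult tendsto_const)
    hence z: "(\<lambda>n. dual_norm norm h * norm (y n - x0)) \<longlonglongrightarrow> 0" by simp
    have "(\<lambda>n. h (y n) - h x0) \<longlonglongrightarrow> 0"
    proof (rule tendsto_0_le[OF z, of _ 1])
      show "\<forall>\<^sub>F n in sequentially. norm (h (y n) - h x0) \<le> norm (dual_norm norm h * norm (y n - x0)) * 1"
      proof (intro always_eventually allI)
        fix n
        have "\<bar>h (y n - x0)\<bar> \<le> dual_norm norm h * norm (y n - x0)" by (rule dn_bound[OF h normlike_norm])
        thus "norm (h (y n) - h x0) \<le> norm (dual_norm norm h * norm (y n - x0)) * 1"
          by (simp add: linear_diff[OF lin])
      qed
    qed
    thus ?thesis by (simp add: LIM_zero_iff)
  qed
  thus ?thesis using WeakTop by (simp add: tau_conv_def)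
qed

lemma conv_scaled:
  fixes us :: "nat \<Rightarrow> 'a::real_normed_vector"
  assumes tc: "tau_conv t norm us u" and r: "r \<longlonglongrightarrow> beta"
    and y: "\<And>n. y n = r n *\<^sub>R us n" and x0: "x0 = beta *\<^sub>R u" and un: "\<And>n. norm (us n) = 1"
  shows "tau_conv t norm y x0"
proof (cases t)
  case NormTop
  have u0: "(\<lambda>n. norm (us n - u)) \<longlonglongrightarrow> 0" using tc NormTop by (simp add: tau_conv_def)
  have "(\<lambda>n. norm (y n - x0)) \<longlonglongrightarrow> 0"
  proof (rule tendsto_sandwich[where f="\<lambda>_. 0" and h="\<lambda>n. \<bar>r n - beta\<bar> + \<bar>beta\<bar> * norm (us n - u)"])
    show "\<forall>\<^sub>F n in sequentially. 0 \<le> norm (y n - x0)" by simp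
    show "\<forall>\<^sub>F n in sequentially. norm (y n - x0) \<le> \<bar>r n - beta\<bar> + \<bar>beta\<bar> * norm (us n - u)"
    proof (intro always_eventually allI)
      fix n
      have "y n - x0 = (r n - beta) *\<^sub>R us n + beta *\<^sub>R (us n - u)"
        by (simp add: y x0 algebra_simps)
      hence "norm (y n - x0) \<le> norm ((r n - beta) *\<^sub>R us n) + norm (beta *\<^sub>R (us n - u))"
        by (metis norm_triangle_ineq)
      thus "norm (y n - x0) \<le> \<bar>r n - beta\<bar> + \<bar>beta\<bar> * norm (us n - u)" by (simp add: un)
    qed
    show "(\<lambda>_. 0) \<longlonglongrightarrow> (0::real)" by simp
    have "(\<lambda>n. \<bar>r n - beta\<bar> + \<bar>beta\<bar> * norm (us n - u)) \<longlonglongrightarrow> \<bar>beta - beta\<bar> + \<bar>beta\<bar> * 0"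
      by (intro tendsto_intros r u0)
    thus "(\<lambda>n. \<bar>r n - beta\<bar> + \<bar>beta\<bar> * norm (us n - u)) \<longlonglongrightarrow> 0" by simp
  qed
  thus ?thesis using NormTop by (simp add: tau_conv_def)
next
  case WeakTop
  have "(\<lambda>n. h (y n)) \<longlonglongrightarrow> h x0" if h: "nrm_bounded_functional norm h" for h
  proof -
    have lin: "linear h" using bf_linear[OF h] .
    have "(\<lambda>n. h (us n)) \<longlonglongrightarrow> h u" using tc WeakTop h by (simp add: tau_conv_def)
    hence "(\<lambda>n. r n * h (us n)) \<longlonglongrightarrow> beta * h u" by (intro tendsto_mult r)
    thus ?thesis by (simp add: y x0 linear_scale[OF lin])
  qed
  thus ?thesis using WeakTop by (simp add: tau_conv_def)
qed

context gam begin

lemma assemble: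
  fixes xs :: "nat \<Rightarrow> ('a::real_normed_vector)^'n"
  assumes co: "\<And>i. tau_conv t norm (\<lambda>n. xs n $ i) (x $ i)"
  shows "tau_conv t N xs x"
proof (cases t)
  case NormTop
  have z: "(\<lambda>n. norm (xs n $ i - x $ i)) \<longlonglongrightarrow> 0" for i using co[of i] NormTop by (simp add: tau_conv_def)
  have "(\<lambda>n. N (xs n - x)) \<longlonglongrightarrow> 0"
  proof (rule tendsto_sandwich[where f="\<lambda>_. 0" and h="\<lambda>n. \<Sum>i\<in>UNIV. norm (xs n $ i - x $ i) * e i"])
    show "\<forall>\<^sub>F n in sequentially. 0 \<le> N (xs n - x)"
      by (simp add: lgamma_norm_def g_nonneg)
    show "\<forall>\<^sub>F n in sequentially. N (xs n - x) \<le> (\<Sum>i\<in>UNIV. norm (xs n $ i - x $ i) * e i)"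
    proof (intro always_eventually allI)
      fix n
      show "N (xs n - x) \<le> (\<Sum>i\<in>UNIV. norm (xs n $ i - x $ i) * e i)"
        using g_upper[of "\<chi> i. norm (xs n $ i - x $ i)"] by (simp add: lgamma_norm_def)
    qed
    show "(\<lambda>_. 0) \<longlonglongrightarrow> (0::real)" by simp
    have "(\<lambda>n. \<Sum>i\<in>UNIV. norm (xs n $ i - x $ i) * e i) \<longlonglongrightarrow> (\<Sum>i\<in>UNIV. 0 * e i)"
      by (intro tendsto_sum tendsto_mult z tendsto_const)
    thus "(\<lambda>n. \<Sum>i\<in>UNIV. norm (xs n $ i - x $ i) * e i) \<longlonglongrightarrow> 0" by simp
  qed
  thus ?thesis using NormTop by (simp add: tau_conv_def)
next
  case WeakTop
  have "(\<lambda>n. H (xs n)) \<longlonglongrightarrow> H x" if H: "nrm_bounded_functional N H" for H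
  proof -
    have lin: "linear H" using bf_linear[OF H] .
    have "(\<lambda>n. H (axis i (xs n $ i))) \<longlonglongrightarrow> H (axis i (x $ i))" for i
    proof -
      have "\<forall>h. nrm_bounded_functional norm h \<longrightarrow> (\<lambda>n. h (xs n $ i)) \<longlonglongrightarrow> h (x $ i)"
        using co[of i] WeakTop by (simp add: tau_conv_def)
      from this[rule_format, OF comp_bf[OF H, of i]] show ?thesis by simp
    qed
    hence "(\<lambda>n. \<Sum>i\<in>UNIV. H (axis i (xs n $ i))) \<longlonglongrightarrow> (\<Sum>i\<in>UNIV. H (axis i (x $ i)))"
      by (intro tendsto_sum)
    moreover have "(\<lambda>n. H (xs n)) = (\<lambda>n. \<Sum>i\<in>UNIV. H (axis i (xs n $ i)))"
      by (rule ext, rule H_sum[OF lin])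
    moreover have "H x = (\<Sum>i\<in>UNIV. H (axis i (x $ i)))" by (rule H_sum[OF lin])
    ultimately show ?thesis by simp
  qed
  thus ?thesis using WeakTop by (simp add: tau_conv_def)
qed

end

context gam begin

lemma limits:
  fixes x :: "('a::real_normed_vector)^'n" and xs :: "nat \<Rightarrow> 'a^'n" and hs L
  assumes x1: "N x = 1" and xs1: "\<And>n. N (xs n) = 1" and hs: "\<And>m. dual_sphere N (hs m)"
    and Lt: "\<And>m. (\<lambda>n. hs m ((1/2) *\<^sub>R (xs n + x))) \<longlonglongrightarrow> L m" and L1: "L \<longlonglongrightarrow> 1"
  defines "b \<equiv> \<chi> i. norm (x $ i)" and "y \<equiv> \<lambda>n. (1/2) *\<^sub>R (xs n + x)"
    and "c \<equiv> \<lambda>n. \<chi> i. norm (((1/2) *\<^sub>R (xs n + x)) $ i)" and "a \<equiv> \<lambda>n. \<chi> i. norm (xs n $ i)"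
  shows "a \<longlonglongrightarrow> b" "c \<longlonglongrightarrow> b" "\<gamma> b = 1" "\<And>n. \<gamma> (c n) \<le> 1" "\<And>m n. hs m (y n) \<le> \<gamma> (c n)"
proof -
  show gb: "\<gamma> b = 1" using x1 by (simp add: lgamma_norm_def b_def)
  have ga: "\<gamma> (a n) = 1" for n using xs1[of n] by (simp add: lgamma_norm_def a_def)
  have bnn: "0 \<le> b $ i" for i by (simp add: b_def)
  have ann: "0 \<le> a n $ i" for n i by (simp add: a_def)
  have cnn: "0 \<le> c n $ i" for n i by (simp add: c_def)
  have c_le: "c n $ i \<le> ((1/2) *\<^sub>R (a n + b)) $ i" for n i
  proof -
    have "c n $ i = (1/2) * norm (xs n $ i + x $ i)" by (simp add: c_def)
    also have "... \<le> (1/2) * (norm (xs n $ i) + norm (x $ i))" by (simp add: norm_triangle_ineq)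
    finally show ?thesis by (simp add: a_def b_def)
  qed
  have gab: "\<gamma> ((1/2) *\<^sub>R (a n + b)) \<le> 1" for n
    using g_tri[of "a n" b] by (simp add: g_scale ga gb)
  have gc_ab: "\<gamma> (c n) \<le> \<gamma> ((1/2) *\<^sub>R (a n + b))" for n
    by (rule g_mono[OF cnn c_le])
  show gc1: "\<gamma> (c n) \<le> 1" for n using gc_ab[of n] gab[of n] by linarith
  show hsc: "hs m (y n) \<le> \<gamma> (c n)" for m n
  proof -
    have bf: "nrm_bounded_functional N (hs m)" and dn: "dual_norm N (hs m) = 1"
      using hs[of m] by (auto simp: dual_sphere_def)
    have "hs m (y n) \<le> \<bar>hs m (y n)\<bar>" by simp
    also have "... \<le> dual_norm N (hs m) * N (y n)" by (rule dn_bound[OF bf N_normlike])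
    finally show ?thesis by (simp add: dn lgamma_norm_def c_def y_def)
  qed
  have ev: "\<forall>\<^sub>F n in sequentially. \<gamma> (c n) > 1 - eps" if eps: "eps > 0" for eps
  proof -
    have "\<forall>\<^sub>F m in sequentially. 1 - eps < L m" using order_tendstoD(1)[OF L1] eps by simp
    then obtain m where m: "1 - eps < L m" by (meson eventually_sequentially order_refl)
    have "\<forall>\<^sub>F n in sequentially. 1 - eps < hs m (y n)" using order_tendstoD(1)[OF Lt[of m] m] by (simp add: y_def)
    thus ?thesis by (rule eventually_mono) (use hsc in \<open>meson less_le_trans\<close>)
  qed
  have gc_lim: "(\<lambda>n. \<gamma> (c n)) \<longlonglongrightarrow> 1" by (rule lim1[OF ev gc1])
  have gab_lim: "(\<lambda>n. \<gamma> ((1/2) *\<^sub>R (a n + b))) \<longlonglongrightarrow> 1"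
  proof (rule lim1[OF _ gab])
    fix eps :: real assume "eps > 0"
    from ev[OF this] show "\<forall>\<^sub>F n in sequentially. \<gamma> ((1/2) *\<^sub>R (a n + b)) > 1 - eps"
      by (rule eventually_mono) (meson gc_ab less_le_trans)
  qed
  define B where "B = (\<Sum>i\<in>UNIV. 1 / e i)"
  have bnd: "norm v \<le> B" if "\<And>i. 0 \<le> v $ i" "\<gamma> v \<le> 1" for v
  proof -
    have "norm v \<le> (\<Sum>i\<in>UNIV. \<bar>v $ i\<bar>)" by (rule norm_le_l1_cart)
    also have "... \<le> B" unfolding B_def
    proof (rule sum_mono)
      fix i
      have "v $ i * e i \<le> 1" using g_lower[OF that(1), of i] that(2) by linarith
      thus "\<bar>v $ i\<bar> \<le> 1 / e i" using that(1)[of i] e_pos[of i] by (simp add: le_divide_eq)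
    qed
    finally show ?thesis .
  qed
  show alim: "a \<longlonglongrightarrow> b"
  proof (rule subseq_limit_unique)
    show "bounded (range a)" unfolding bounded_iff using bnd ann ga by (intro exI[of _ B]) auto
  next
    fix r :: "nat \<Rightarrow> nat" and l assume r: "strict_mono r" and l: "(\<lambda>n. a (r n)) \<longlonglongrightarrow> l"
    have "(\<lambda>n. \<gamma> (a (r n))) \<longlonglongrightarrow> \<gamma> l" by (rule g_tendsto[OF l])
    hence gl: "\<gamma> l = 1" using ga by (simp add: LIMSEQ_const_iff)
    have "(\<lambda>n. \<gamma> ((1/2) *\<^sub>R (a (r n) + b))) \<longlonglongrightarrow> \<gamma> ((1/2) *\<^sub>R (l + b))"
      by (intro g_tendsto tendsto_intros l)
    moreover have "(\<lambda>n. \<gamma> ((1/2) *\<^sub>R (a (r n) + b))) \<longlonglongrightarrow> 1"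
      using LIMSEQ_subseq_LIMSEQ[OF gab_lim r] by (simp add: o_def)
    ultimately have "\<gamma> ((1/2) *\<^sub>R (l + b)) = 1" using LIMSEQ_unique by blast
    thus "l = b" using g_sc[OF gl gb] by force
  qed
  show "c \<longlonglongrightarrow> b"
  proof (rule subseq_limit_unique)
    show "bounded (range c)" unfolding bounded_iff using bnd cnn gc1 by (intro exI[of _ B]) auto
  next
    fix r :: "nat \<Rightarrow> nat" and l assume r: "strict_mono r" and l: "(\<lambda>n. c (r n)) \<longlonglongrightarrow> l"
    have "(\<lambda>n. \<gamma> (c (r n))) \<longlonglongrightarrow> \<gamma> l" by (rule g_tendsto[OF l])
    moreover have "(\<lambda>n. \<gamma> (c (r n))) \<longlonglongrightarrow> 1"
      using LIMSEQ_subseq_LIMSEQ[OF gc_lim r] by (simp add: o_def)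
    ultimately have gl: "\<gamma> l = 1" using LIMSEQ_unique by blast
    have lnn: "0 \<le> l $ i" for i
      using tendsto_vec_nth[OF l, of i] cnn by (intro LIMSEQ_le_const) auto
    have lle: "l $ i \<le> b $ i" for i
    proof -
      have "(\<lambda>n. ((1/2) *\<^sub>R (a (r n) + b)) $ i) \<longlonglongrightarrow> ((1/2) *\<^sub>R (b + b)) $ i"
        using LIMSEQ_subseq_LIMSEQ[OF alim r] by (intro tendsto_intros) (simp add: o_def)
      hence "(\<lambda>n. ((1/2) *\<^sub>R (a (r n) + b)) $ i) \<longlonglongrightarrow> b $ i" by simp
      thus ?thesis using tendsto_vec_nth[OF l, of i] c_le
        by (intro LIMSEQ_le[of "\<lambda>n. c (r n) $ i" _ "\<lambda>n. ((1/2) *\<^sub>R (a (r n) + b)) $ i"]) auto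
    qed
    show "l = b" by (rule g_strict_mono[OF lnn lle gl gb])
  qed
qed

end

context gam begin

lemma coord_pos:
  fixes x :: "('a::real_normed_vector)^'n" and xs :: "nat \<Rightarrow> 'a^'n" and hs L and i
  assumes A: "tau_ALUR t (norm::'a\<Rightarrow>real)"
    and hs: "\<And>m. dual_sphere N (hs m)"
    and Lt: "\<And>m. (\<lambda>n. hs m ((1/2) *\<^sub>R (xs n + x))) \<longlonglongrightarrow> L m" and L1: "L \<longlonglongrightarrow> 1"
    and clim: "(\<lambda>n. \<chi> j. norm (((1/2) *\<^sub>R (xs n + x)) $ j)) \<longlonglongrightarrow> (\<chi> j. norm (x $ j))"
    and anl: "(\<lambda>n. norm (xs n $ i)) \<longlonglongrightarrow> norm (x $ i)"
    and gb: "\<gamma> (\<chi> j. norm (x $ j)) = 1"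
    and gc1: "\<And>n. \<gamma> (\<chi> j. norm (((1/2) *\<^sub>R (xs n + x)) $ j)) \<le> 1"
    and bpos: "norm (x $ i) > 0"
  shows "tau_conv t norm (\<lambda>n. xs n $ i) (x $ i)"
proof -
  define \<beta> where "\<beta> = norm (x $ i)"
  define b where "b = (\<chi> j. norm (x $ j))"
  define y where "y n = (1/2) *\<^sub>R (xs n + x)" for n
  define c where "c n = (\<chi> j. norm (y n $ j))" for n
  define c' where "c' n = (\<chi> j. if j = i then 0 else c n $ j)" for n
  define b' where "b' = (\<chi> j. if j = i then 0 else b $ j)"
  define \<delta> where "\<delta> = 1 - \<gamma> b'"
  have bp: "\<beta> > 0" using bpos by (simp add: \<beta>_def)
  have \<delta>pos: "\<delta> > 0" unfolding \<delta>_def b'_def using g_drop[of b i] gb bpos by (simp add: b_def)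
  have cl: "c \<longlonglongrightarrow> b" unfolding c_def y_def b_def by (rule clim)
  have cjl: "(\<lambda>n. c n $ j) \<longlonglongrightarrow> b $ j" for j by (rule tendsto_vec_nth[OF cl])
  have c'l: "c' \<longlonglongrightarrow> b'" unfolding c'_def b'_def
  proof (rule tendsto_vec_lambda)
    fix j show "(\<lambda>n. if j = i then 0 else c n $ j) \<longlonglongrightarrow> (if j = i then 0 else b $ j)"
      by (cases "j = i") (simp_all add: cjl)
  qed
  have gc'l: "(\<lambda>n. \<gamma> (c' n)) \<longlonglongrightarrow> 1 - \<delta>" using g_tendsto[OF c'l] by (simp add: \<delta>_def)
  have cil: "(\<lambda>n. c n $ i) \<longlonglongrightarrow> \<beta>" using cjl[of i] by (simp add: b_def \<beta>_def)
  have cnn: "0 \<le> c n $ j" for n j by (simp add: c_def)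
  have c'nn: "0 \<le> c' n $ j" for n j by (simp add: c'_def cnn)
  have gcn: "\<gamma> (c n) \<le> 1" for n using gc1[of n] by (simp add: c_def y_def)
  define \<psi> where "\<psi> m j = dual_norm norm (\<lambda>v. hs m (axis j v))" for m j
  have bf: "nrm_bounded_functional N (hs m)" and dn: "dual_norm N (hs m) = 1" for m
    using hs[of m] by (auto simp: dual_sphere_def)
  have F1: "hs m (y n) = (\<Sum>j\<in>UNIV. hs m (axis j (y n $ j)))" for m n
    by (rule H_sum[OF bf_linear[OF bf]])
  have F2: "hs m (axis j (y n $ j)) \<le> \<psi> m j * c n $ j" for m n j
  proof -
    have "\<bar>hs m (axis j (y n $ j))\<bar> \<le> \<psi> m j * norm (y n $ j)"
      unfolding \<psi>_def by (rule dn_bound[OF comp_bf[OF bf] normlike_norm])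
    thus ?thesis by (simp add: c_def)
  qed
  have F3: "(\<Sum>j\<in>UNIV. \<psi> m j * c n $ j) \<le> \<gamma> (c n)" for m n
    unfolding \<psi>_def using KI[OF bf, of m "c n"] dn[of m] cnn by simp
  have F4: "(\<Sum>j\<in>UNIV. \<psi> m j * c' n $ j) \<le> \<gamma> (c' n)" for m n
    unfolding \<psi>_def using KI[OF bf, of m "c' n"] dn[of m] c'nn by simp
  have split: "(\<Sum>j\<in>UNIV. \<psi> m j * c n $ j) = \<psi> m i * c n $ i + (\<Sum>j\<in>UNIV. \<psi> m j * c' n $ j)" for m n
  proof -
    have "(\<Sum>j\<in>UNIV. \<psi> m j * c n $ j) = \<psi> m i * c n $ i + (\<Sum>j\<in>UNIV - {i}. \<psi> m j * c n $ j)"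
      by (rule sum.remove) auto
    moreover have "(\<Sum>j\<in>UNIV. \<psi> m j * c' n $ j) = \<psi> m i * c' n $ i + (\<Sum>j\<in>UNIV - {i}. \<psi> m j * c' n $ j)"
      by (rule sum.remove) auto
    moreover have "(\<Sum>j\<in>UNIV - {i}. \<psi> m j * c' n $ j) = (\<Sum>j\<in>UNIV - {i}. \<psi> m j * c n $ j)"
      by (rule sum.cong) (auto simp: c'_def)
    ultimately show ?thesis by (simp add: c'_def)
  qed
  have D1: "hs m (y n) \<le> \<psi> m i * c n $ i + \<gamma> (c' n)" for m n
  proof -
    have "hs m (y n) \<le> (\<Sum>j\<in>UNIV. \<psi> m j * c n $ j)" unfolding F1 by (intro sum_mono F2)
    thus ?thesis using split[of m n] F4[of m n] by linarith
  qed
  have D2: "\<psi> m i * c n $ i - hs m (axis i (y n $ i)) \<le> 1 - hs m (y n)" for m n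
  proof -
    have "\<psi> m i * c n $ i - hs m (axis i (y n $ i)) \<le> (\<Sum>j\<in>UNIV. \<psi> m j * c n $ j - hs m (axis j (y n $ j)))"
      by (rule member_le_sum) (auto simp: F2)
    also have "... = (\<Sum>j\<in>UNIV. \<psi> m j * c n $ j) - hs m (y n)" by (simp add: F1 sum_subtractf)
    also have "... \<le> 1 - hs m (y n)" using F3[of m n] gcn[of n] by linarith
    finally show ?thesis .
  qed
  have psilow: "L m - (1 - \<delta>) \<le> \<psi> m i * \<beta>" for m
  proof -
    have "(\<lambda>n. hs m (y n) - \<gamma> (c' n)) \<longlonglongrightarrow> L m - (1 - \<delta>)"
      using Lt[of m] gc'l by (intro tendsto_diff) (simp_all add: y_def)
    moreover have "(\<lambda>n. \<psi> m i * c n $ i) \<longlonglongrightarrow> \<psi> m i * \<beta>" by (intro tendsto_mult tendsto_const cil)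
    ultimately show ?thesis using D1 by (intro LIMSEQ_le[of "\<lambda>n. hs m (y n) - \<gamma> (c' n)" _ "\<lambda>n. \<psi> m i * c n $ i"]) (auto simp: algebra_simps)
  qed
  define u where "u = (1 / \<beta>) *\<^sub>R x $ i"
  define us where "us n = (if xs n $ i = 0 then u else (1 / norm (xs n $ i)) *\<^sub>R xs n $ i)" for n
  have nu: "norm u = 1" using bp by (simp add: u_def \<beta>_def)
  have nus: "norm (us n) = 1" for n by (simp add: us_def nu)
  have xsi: "xs n $ i = norm (xs n $ i) *\<^sub>R us n" for n by (simp add: us_def)
  have xi: "x $ i = \<beta> *\<^sub>R u" using bp by (simp add: u_def)
  have "tau_conv t norm us u"
  proof (rule alur_weak[OF A nu])
    show "\<forall>n. norm (us n) = 1" using nus by simp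
  next
    fix eps :: real assume eps: "eps > 0"
    define \<eta> where "\<eta> = min (\<delta>/2) (eps * \<delta> / 4)"
    have \<eta>pos: "\<eta> > 0" using eps \<delta>pos by (simp add: \<eta>_def)
    have "\<forall>\<^sub>F m in sequentially. 1 - \<eta> < L m" using order_tendstoD(1)[OF L1] \<eta>pos by simp
    then obtain m where m: "1 - \<eta> < L m" by (meson eventually_sequentially order_refl)
    define p where "p = \<psi> m i"
    have "\<delta> / 2 \<le> p * \<beta>" using psilow[of m] m by (simp add: p_def \<eta>_def)
    hence plow: "\<delta> / (2 * \<beta>) \<le> p" using bp by (simp add: field_simps)
    have ppos: "p > 0" using plow \<delta>pos bp by (smt (verit) divide_pos_pos)
    define g where "g v = hs m (axis i v) / p" for v
    have gbf: "nrm_bounded_functional norm g" unfolding g_def by (rule bf_scale[OF comp_bf[OF bf]])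
    have gdn: "dual_norm norm g = 1"
      unfolding g_def using dn_scale[OF comp_bf[OF bf] normlike_norm ppos] ppos by (simp add: p_def \<psi>_def)
    have glin: "linear g" by (rule bf_linear[OF gbf])
    have gsph: "dual_sphere norm g" using gbf gdn by (simp add: dual_sphere_def)
    define R where "R n = (c n $ i - (1 - hs m (y n)) / p) / \<beta> - \<bar>\<beta> - norm (xs n $ i)\<bar> / (2 * \<beta>)" for n
    have Rle: "R n \<le> g ((1/2) *\<^sub>R (us n + u))" for n
    proof -
      define r where "r = norm (xs n $ i)"
      have yi: "y n $ i = (1/2) *\<^sub>R (r *\<^sub>R us n + \<beta> *\<^sub>R u)"
        by (simp add: y_def r_def flip: xsi xi)
      have decomp: "(1/2) *\<^sub>R (us n + u) = (1 / \<beta>) *\<^sub>R (y n $ i) + ((1/2) * (1 - r / \<beta>)) *\<^sub>R us n"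
      proof -
        have coef: "r / (\<beta> * 2) + (1/2) * (1 - r / \<beta>) = 1/2" using bp by (simp add: field_simps)
        have c1: "1 / \<beta> * (1/2) * r = r / (\<beta> * 2)" "1 / \<beta> * (1/2) * \<beta> = 1/2" using bp by simp_all
        have h1: "(1 / \<beta>) *\<^sub>R (y n $ i) = (r / (\<beta> * 2)) *\<^sub>R us n + (1/2) *\<^sub>R u"
        proof -
          have "(1 / \<beta>) *\<^sub>R (y n $ i) = (1 / \<beta> * (1/2) * r) *\<^sub>R us n + (1 / \<beta> * (1/2) * \<beta>) *\<^sub>R u"
            unfolding yi by (simp only: scaleR_add_right scaleR_scaleR mult.assoc)
          thus ?thesis by (simp only: c1)
        qed
        have "(1/2) *\<^sub>R (us n + u) = (r / (\<beta> * 2) + (1/2) * (1 - r / \<beta>)) *\<^sub>R us n + (1/2) *\<^sub>R u"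
          unfolding coef by (simp add: scaleR_add_right)
        also have "... = (1 / \<beta>) *\<^sub>R (y n $ i) + ((1/2) * (1 - r / \<beta>)) *\<^sub>R us n"
          unfolding h1 scaleR_add_left by simp
        finally show ?thesis .
      qed
      have gus: "\<bar>g (us n)\<bar> \<le> 1" using dn_bound[OF gbf normlike_norm, of "us n"] gdn nus by simp
      have "g ((1/2) *\<^sub>R (us n + u)) = g (y n $ i) / \<beta> + ((1/2) * (1 - r / \<beta>)) * g (us n)"
        unfolding decomp by (simp add: linear_add[OF glin] linear_scale[OF glin])
      moreover have "\<bar>((1/2) * (1 - r / \<beta>)) * g (us n)\<bar> \<le> \<bar>\<beta> - r\<bar> / (2 * \<beta>)"
      proof -
        have "\<bar>((1/2) * (1 - r / \<beta>)) * g (us n)\<bar> \<le> \<bar>(1/2) * (1 - r / \<beta>)\<bar> * 1"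
          unfolding abs_mult by (intro mult_left_mono gus) simp
        also have "\<bar>(1/2) * (1 - r / \<beta>)\<bar> = \<bar>\<beta> - r\<bar> / (2 * \<beta>)"
          using bp by (simp add: abs_mult abs_divide field_simps)
        finally show ?thesis by simp
      qed
      moreover have "c n $ i - (1 - hs m (y n)) / p \<le> g (y n $ i)"
      proof -
        have "p * c n $ i - hs m (axis i (y n $ i)) \<le> 1 - hs m (y n)" using D2[of m n] by (simp add: p_def)
        hence "(p * c n $ i - (1 - hs m (y n))) / p \<le> hs m (axis i (y n $ i)) / p"
          using ppos by (intro divide_right_mono) auto
        moreover have "(p * c n $ i - (1 - hs m (y n))) / p = c n $ i - (1 - hs m (y n)) / p"
          using ppos by (simp add: diff_divide_distrib)
        ultimately have "c n $ i - (1 - hs m (y n)) / p \<le> hs m (axis i (y n $ i)) / p" by simp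
        thus ?thesis by (simp add: g_def)
      qed
      hence "(c n $ i - (1 - hs m (y n)) / p) / \<beta> \<le> g (y n $ i) / \<beta>"
        using bp by (simp add: divide_right_mono)
      ultimately show ?thesis unfolding R_def r_def by linarith
    qed
    define q where "q = (1 - L m) / p"
    have hl: "(\<lambda>n. hs m (y n)) \<longlonglongrightarrow> L m" using Lt[of m] by (simp add: y_def)
    have al: "(\<lambda>n. norm (xs n $ i)) \<longlonglongrightarrow> \<beta>" using anl by (simp add: \<beta>_def)
    have Rl: "R \<longlonglongrightarrow> (\<beta> - q) / \<beta> - \<bar>\<beta> - \<beta>\<bar> / (2 * \<beta>)"
      unfolding R_def q_def using hl cil al ppos bp by (intro tendsto_intros) auto
    have "q < \<eta> / p" unfolding q_def using m ppos by (simp add: divide_strict_right_mono)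
    also have "\<eta> / p \<le> \<eta> / (\<delta> / (2 * \<beta>))"
    proof (rule divide_left_mono[OF plow])
      show "0 \<le> \<eta>" using \<eta>pos by simp
      show "0 < p * (\<delta> / (2 * \<beta>))" using ppos \<delta>pos bp by simp
    qed
    also have "... = 2 * \<beta> * \<eta> / \<delta>" by simp
    finally have "q < 2 * \<beta> * \<eta> / \<delta>" .
    hence "q / \<beta> < 2 * \<eta> / \<delta>" using bp by (simp add: field_simps)
    moreover have "2 * \<eta> / \<delta> \<le> eps / 2"
      using \<delta>pos by (simp add: \<eta>_def field_simps min_def)
    ultimately have "1 - eps < (\<beta> - q) / \<beta> - \<bar>\<beta> - \<beta>\<bar> / (2 * \<beta>)"
      using bp eps by (simp add: diff_divide_distrib)
    hence "\<forall>\<^sub>F n in sequentially. 1 - eps < R n" by (rule order_tendstoD(1)[OF Rl])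
    hence "\<forall>\<^sub>F n in sequentially. g ((1/2) *\<^sub>R (us n + u)) > 1 - eps"
      by (rule eventually_mono) (meson Rle less_le_trans)
    thus "\<exists>g. dual_sphere norm g \<and> (\<forall>\<^sub>F n in sequentially. g ((1/2) *\<^sub>R (us n + u)) > 1 - eps)"
      using gsph by blast
  qed
  thus ?thesis
    by (rule conv_scaled[OF _ anl xsi xi[unfolded \<beta>_def] nus])
qed

end

theorem theorem3p5:
  fixes t :: topo and \<gamma> :: "real^'n \<Rightarrow> real"
  assumes "tau_ALUR t (norm :: 'a::banach \<Rightarrow> real)"
    and "is_norm_fun \<gamma>" and "monotone_norm \<gamma>" and "strictly_convex_norm \<gamma>"
  shows "tau_ALUR t (lgamma_norm \<gamma> :: 'a^'n \<Rightarrow> real)"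
proof -
  interpret gam \<gamma> using assms(2-4) by unfold_locales
  show ?thesis unfolding tau_ALUR_def
  proof (intro allI impI, elim conjE exE)
    fix x :: "'a^'n" and xs hs L
    assume x1: "lgamma_norm \<gamma> x = 1" and xs1: "\<forall>n. lgamma_norm \<gamma> (xs n) = 1"
      and hs: "\<forall>m. dual_sphere (lgamma_norm \<gamma>) (hs m)"
      and Lt: "\<forall>m. (\<lambda>n. hs m ((1/2) *\<^sub>R (xs n + x))) \<longlonglongrightarrow> L m" and L1: "L \<longlonglongrightarrow> 1"
    have xs1': "\<And>n. N (xs n) = 1" and hs': "\<And>m. dual_sphere N (hs m)"
      and Lt': "\<And>m. (\<lambda>n. hs m ((1/2) *\<^sub>R (xs n + x))) \<longlonglongrightarrow> L m"
      using xs1 hs Lt by auto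
    note lim = limits[OF x1 xs1' hs' Lt' L1]
    have co: "tau_conv t norm (\<lambda>n. xs n $ i) (x $ i)" for i
    proof (cases "x $ i = 0")
      case True
      have "(\<lambda>n. norm (xs n $ i)) \<longlonglongrightarrow> norm (x $ i)" using tendsto_vec_nth[OF lim(1), of i] by simp
      hence "(\<lambda>n. norm (xs n $ i - x $ i)) \<longlonglongrightarrow> 0" using True by simp
      thus ?thesis by (rule norm_imp_tau)
    next
      case False
      have anl: "(\<lambda>n. norm (xs n $ i)) \<longlonglongrightarrow> norm (x $ i)" using tendsto_vec_nth[OF lim(1), of i] by simp
      show ?thesis by (rule coord_pos[OF assms(1) hs' Lt' L1 lim(2) anl lim(3) lim(4)]) (use False in simp)
    qed
    show "tau_conv t (lgamma_norm \<gamma>) xs x" by (rule assemble[OF co])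
  qed
qed

end
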